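(* Let $G$ be a graph. Then $\lfloor \mathrm{sp}\rfloor(G)=0$ if and only if $G$ is a disjoint union of paths.
   Context: All graphs are finite, have at least one vertex, have no loops, and may have multiple (parallel) edges. A unique shortest path is a shortest $u$–$v$ path $P$ such that every $u$–$v$ path with the same number of vertices is identical to $P$, where two paths with different edge sequences are different even if their vertex sequences agree; a single vertex is a unique shortest path. The parade number $\mathrm{usp}(G)$ is the largest number of vertices of a unique shortest path in $G$. The spectator number is $\mathrm{sp}(G)=|V(G)|-\mathrm{usp}(G)$. A minor of $H$ is any graph obtained from $H$ by a sequence of: deleting an isolated vertex, deleting an edge, contracting an edge that has no edge parallel to it. The spectator floor $\lfloor \mathrm{sp}\rfloor(G)$ is the minimum of $\mathrm{sp}(H)$ over all graphs $H$ of which $G$ is a minor. *)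

theory Defs
  imports Main
begin

text \<open>Parallel edges are distinct edge identities with the same
  endpoints.\<close>

record ('a, 'b) mgraph =
  verts :: "'a set"
  edges :: "'b set"
  ends  :: "'b \<Rightarrow> 'a set"

definition wf_graph :: "('a, 'b) mgraph \<Rightarrow> bool" where
  "wf_graph G \<longleftrightarrow> finite (verts G) \<and> verts G \<noteq> {} \<and> finite (edges G) \<and>
     (\<forall>e\<in>edges G. ends G e \<subseteq> verts G \<and> card (ends G e) = 2)"

text \<open>A u-v path: a list of distinct vertices together with the list of edges
  joining consecutive vertices. Two paths are identical iff both lists agree.\<close>

definition is_path :: "('a, 'b) mgraph \<Rightarrow> 'a \<Rightarrow> 'a \<Rightarrow> 'a list \<Rightarrow> 'b list \<Rightarrow> bool" where
  "is_path G u v vs es \<longleftrightarrow>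
     vs \<noteq> [] \<and> distinct vs \<and> set vs \<subseteq> verts G \<and> hd vs = u \<and> last vs = v \<and>
     length es + 1 = length vs \<and>
     (\<forall>i < length es. es ! i \<in> edges G \<and> ends G (es ! i) = {vs ! i, vs ! Suc i})"

definition is_usp :: "('a, 'b) mgraph \<Rightarrow> 'a \<Rightarrow> 'a \<Rightarrow> 'a list \<Rightarrow> 'b list \<Rightarrow> bool" where
  "is_usp G u v vs es \<longleftrightarrow>
     is_path G u v vs es \<and>
     (\<forall>vs' es'. is_path G u v vs' es' \<longrightarrow> length vs \<le> length vs') \<and>
     (\<forall>vs' es'. is_path G u v vs' es' \<and> length vs' = length vs \<longrightarrow> vs' = vs \<and> es' = es)"

definition usp :: "('a, 'b) mgraph \<Rightarrow> nat" where
  "usp G = Max {length vs | vs. \<exists>u v es. is_usp G u v vs es}"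

definition sp :: "('a, 'b) mgraph \<Rightarrow> nat" where
  "sp G = card (verts G) - usp G"

inductive minor_step :: "('a, 'b) mgraph \<Rightarrow> ('a, 'b) mgraph \<Rightarrow> bool" where
  del_vertex: "\<lbrakk>v \<in> verts H; \<forall>e\<in>edges H. v \<notin> ends H e\<rbrakk>
     \<Longrightarrow> minor_step H (H\<lparr>verts := verts H - {v}\<rparr>)"
| del_edge: "e \<in> edges H \<Longrightarrow> minor_step H (H\<lparr>edges := edges H - {e}\<rparr>)"
| contract: "\<lbrakk>e \<in> edges H; ends H e = {u, v}; u \<noteq> v;
     \<forall>f\<in>edges H. f \<noteq> e \<longrightarrow> ends H f \<noteq> ends H e\<rbrakk>
     \<Longrightarrow> minor_step H \<lparr>verts = verts H - {v}, edges = edges H - {e},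
                          ends = (\<lambda>f. (\<lambda>x. if x = v then u else x) ` ends H f)\<rparr>"

definition graph_iso :: "('a, 'b) mgraph \<Rightarrow> ('c, 'd) mgraph \<Rightarrow> bool" where
  "graph_iso G1 G2 \<longleftrightarrow> (\<exists>f g. bij_betw f (verts G1) (verts G2) \<and>
      bij_betw g (edges G1) (edges G2) \<and>
      (\<forall>e\<in>edges G1. ends G2 (g e) = f ` ends G1 e))"

definition is_minor :: "('c, 'd) mgraph \<Rightarrow> ('a, 'b) mgraph \<Rightarrow> bool" where
  "is_minor G H \<longleftrightarrow> (\<exists>H'. minor_step\<^sup>*\<^sup>* H H' \<and> graph_iso H' G)"

text \<open>Host graphs are taken with vertex and edge identities in nat, which is no
  loss since every finite graph is isomorphic to one of this type.\<close>

definition spec_floor :: "('a, 'b) mgraph \<Rightarrow> nat" where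
  "spec_floor G = (LEAST n. \<exists>H :: (nat, nat) mgraph. wf_graph H \<and> is_minor G H \<and> sp H = n)"

definition disjoint_union_of_paths :: "('a, 'b) mgraph \<Rightarrow> bool" where
  "disjoint_union_of_paths G \<longleftrightarrow> (\<exists>Ps :: 'a list list.
     [] \<notin> set Ps \<and> distinct (concat Ps) \<and> set (concat Ps) = verts G \<and>
     inj_on (ends G) (edges G) \<and>
     ends G ` edges G = {{P ! i, P ! Suc i} | P i. P \<in> set Ps \<and> Suc i < length P})"

end

theory Submission
  imports Defs
begin


fun adjs :: "'a list \<Rightarrow> 'a set set" where
  "adjs (x # y # L) = insert {x, y} (adjs (y # L))"
| "adjs _ = {}"

lemma adjs_Cons: "adjs (x # ys) = (if ys = [] then {} else insert {x, hd ys} (adjs ys))"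
  by (cases ys) auto

lemma adjs_sub: "p \<in> adjs L \<Longrightarrow> p \<subseteq> set L"
  by (induction L rule: adjs.induct) auto

lemma adjs_append:
  "adjs (xs @ ys) = adjs xs \<union> adjs ys \<union> (if xs = [] \<or> ys = [] then {} else {{last xs, hd ys}})"
proof (induction xs)
  case Nil then show ?case by simp
next
  case (Cons x xs)
  show ?case
  proof (cases xs)
    case Nil then show ?thesis by (simp add: adjs_Cons)
  next
    case (Cons y zs)
    then show ?thesis using Cons.IH by (auto simp: adjs_Cons)
  qed
qed

lemma adjs_nth: "adjs L = {{L ! i, L ! Suc i} | i. Suc i < length L}"
proof (induction L rule: adjs.induct)
  case (1 x y L)
  have "{{(x # y # L) ! i, (x # y # L) ! Suc i} | i. Suc i < length (x # y # L)}
     = insert {x, y} {{(y # L) ! i, (y # L) ! Suc i} | i. Suc i < length (y # L)}"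
    (is "?A = ?B")
  proof
    show "?A \<subseteq> ?B"
    proof
      fix p assume "p \<in> ?A"
      then obtain i where "p = {(x # y # L) ! i, (x # y # L) ! Suc i}" "Suc i < length (x # y # L)" by blast
      then show "p \<in> ?B" by (cases i) auto
    qed
  next
    show "?B \<subseteq> ?A"
    proof
      fix p assume "p \<in> ?B"
      then consider "p = {x, y}" | i where "p = {(y # L) ! i, (y # L) ! Suc i}" "Suc i < length (y # L)" by blast
      then show "p \<in> ?A"
      proof cases
        case 1 then show ?thesis by force
      next
        case 2 then show ?thesis
          by (auto intro!: exI[of _ "Suc i"])
      qed
    qed
  qed
  then show ?case using 1 by simp
qed auto

lemma adjs_map: "adjs (map f L) = (\<lambda>p. f ` p) ` adjs L"
  by (induction L rule: adjs.induct) auto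

lemma adjs_filter: "p \<in> adjs L \<Longrightarrow> \<forall>x\<in>p. P x \<Longrightarrow> p \<in> adjs (filter P L)"
proof (induction L rule: adjs.induct)
  case (1 x y L)
  show ?case
  proof (cases "p = {x, y}")
    case True then show ?thesis using 1 by (simp add: adjs_Cons)
  next
    case False
    then have "p \<in> adjs (filter P (y # L))" using 1 by simp
    then show ?thesis by (auto simp: adjs_Cons)
  qed
qed auto

lemma adjs_contract:
  assumes "distinct L" "{u, v} \<in> adjs L" "{v, b} \<in> adjs L" "u \<noteq> v" "v \<noteq> b" "u \<noteq> b"
  shows "{u, b} \<in> adjs (filter (\<lambda>x. x \<noteq> v) L)"
proof -
  have "v \<in> set L" using adjs_sub assms(2) by blast
  then obtain xs ys where L: "L = xs @ v # ys" by (meson split_list)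
  have nx: "v \<notin> set xs" "v \<notin> set ys" "set xs \<inter> set ys = {}" using assms(1) L by auto
  have f: "filter (\<lambda>x. x \<noteq> v) L = xs @ ys" proof -
    have "filter (\<lambda>x. x \<noteq> v) xs = xs" "filter (\<lambda>x. x \<noteq> v) ys = ys"
      using nx by (auto intro!: filter_True)
    then show ?thesis using L by simp
  qed
  have nv: "\<And>p. p \<in> adjs xs \<Longrightarrow> v \<notin> p" "\<And>p. p \<in> adjs ys \<Longrightarrow> v \<notin> p" using adjs_sub nx by blast+
  have c: "w = last xs \<and> xs \<noteq> [] \<or> w = hd ys \<and> ys \<noteq> []" if "{w, v} \<in> adjs L" "w \<noteq> v" for w
    using that nv unfolding L by (auto simp: adjs_append adjs_Cons doubleton_eq_iff split: if_splits)
  have cu: "u = last xs \<and> xs \<noteq> [] \<or> u = hd ys \<and> ys \<noteq> []" using c assms by auto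
  have cb: "b = last xs \<and> xs \<noteq> [] \<or> b = hd ys \<and> ys \<noteq> []" using c[of b] assms by (auto simp: insert_commute)
  show ?thesis unfolding f using cu cb assms(6) by (auto simp: adjs_append insert_commute)
qed

lemma adjs_triangle:
  assumes "distinct L" "{u, v} \<in> adjs L" "{v, b} \<in> adjs L" "{u, b} \<in> adjs L" "u \<noteq> v" "v \<noteq> b" "u \<noteq> b"
  shows False
proof -
  have "v \<in> set L" using adjs_sub assms(2) by blast
  then obtain xs ys where L: "L = xs @ v # ys" by (meson split_list)
  have nx: "v \<notin> set xs" "v \<notin> set ys" "set xs \<inter> set ys = {}" using assms(1) L by auto
  have nv: "\<And>p. p \<in> adjs xs \<Longrightarrow> v \<notin> p" "\<And>p. p \<in> adjs ys \<Longrightarrow> v \<notin> p" using adjs_sub nx by blast+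
  have c: "w = last xs \<and> xs \<noteq> [] \<or> w = hd ys \<and> ys \<noteq> []" if "{w, v} \<in> adjs L" "w \<noteq> v" for w
    using that nv unfolding L by (auto simp: adjs_append adjs_Cons doubleton_eq_iff split: if_splits)
  have cu: "u = last xs \<and> xs \<noteq> [] \<or> u = hd ys \<and> ys \<noteq> []" using c assms by auto
  have cb: "b = last xs \<and> xs \<noteq> [] \<or> b = hd ys \<and> ys \<noteq> []" using c[of b] assms by (auto simp: insert_commute)
  have ub: "{u, b} = {last xs, hd ys}" "xs \<noteq> []" "ys \<noteq> []" using cu cb assms(7) by (auto simp: insert_commute)
  have lx: "last xs \<in> set xs" "hd ys \<in> set ys" using ub by auto
  have "{last xs, hd ys} \<notin> adjs xs" using adjs_sub lx nx(3) by blast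
  moreover have "{last xs, hd ys} \<notin> adjs ys" using adjs_sub lx nx(3) by blast
  moreover have "last xs \<noteq> v" "hd ys \<noteq> v" using lx nx by auto
  moreover have "last xs \<noteq> hd ys" using lx nx by auto
  ultimately show False using assms(4) unfolding L ub(1) using ub
    by (auto simp: adjs_append adjs_Cons doubleton_eq_iff)
qed


definition inv_lin :: "('a, 'b) mgraph \<Rightarrow> bool" where
  "inv_lin H \<longleftrightarrow> (\<exists>L. distinct L \<and> set L = verts H \<and> inj_on (ends H) (edges H) \<and> ends H ` edges H \<subseteq> adjs L)"

lemma adjs_pair: "distinct L \<Longrightarrow> p \<in> adjs L \<Longrightarrow> \<exists>a b. p = {a, b} \<and> a \<noteq> b \<and> a \<in> set L \<and> b \<in> set L"
proof -
  assume d: "distinct L" and p: "p \<in> adjs L"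
  then obtain i where i: "p = {L ! i, L ! Suc i}" "Suc i < length L" unfolding adjs_nth by blast
  have "L ! i \<noteq> L ! Suc i" using d i(2) by (simp add: nth_eq_iff_index_eq)
  then show ?thesis using i by (intro exI[of _ "L ! i"] exI[of _ "L ! Suc i"]) auto
qed

lemma inv_step:
  assumes "minor_step H H'" "inv_lin H"
  shows "inv_lin H'"
  using assms
proof cases
  case (del_vertex v)
  from assms(2) obtain L where L: "distinct L" "set L = verts H" "inj_on (ends H) (edges H)" "ends H ` edges H \<subseteq> adjs L"
    unfolding inv_lin_def by blast
  have "ends H ` edges H \<subseteq> adjs (filter (\<lambda>x. x \<noteq> v) L)"
  proof
    fix p assume "p \<in> ends H ` edges H"
    then obtain f where f: "f \<in> edges H" "p = ends H f" by blast
    then have "p \<in> adjs L" "v \<notin> p" using L(4) del_vertex(3) by auto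
    then show "p \<in> adjs (filter (\<lambda>x. x \<noteq> v) L)" using adjs_filter[of p L "\<lambda>x. x \<noteq> v"] by blast
  qed
  moreover have "distinct (filter (\<lambda>x. x \<noteq> v) L)" "set (filter (\<lambda>x. x \<noteq> v) L) = verts H - {v}"
    using L by auto
  ultimately show ?thesis unfolding inv_lin_def del_vertex(1) using L(3)
    by (intro exI[of _ "filter (\<lambda>x. x \<noteq> v) L"]) simp
next
  case (del_edge e)
  then show ?thesis using assms(2) unfolding inv_lin_def by (auto intro: inj_on_subset)
next
  case (contract e u v)
  from assms(2) obtain L where L: "distinct L" "set L = verts H" "inj_on (ends H) (edges H)" "ends H ` edges H \<subseteq> adjs L"
    unfolding inv_lin_def by blast
  define \<sigma> where "\<sigma> = (\<lambda>x. if x = v then u else x)"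
  have H': "verts H' = verts H - {v}" "edges H' = edges H - {e}" "ends H' = (\<lambda>f. \<sigma> ` ends H f)"
    by (simp_all add: contract(1) \<sigma>_def)
  have fixs: "\<sigma> ` S = S" if "v \<notin> S" for S
  proof -
    have "\<sigma> x = x" if "x \<in> S" for x using that \<open>v \<notin> S\<close> by (auto simp: \<sigma>_def)
    then show ?thesis by simp
  qed
  have sv: "\<sigma> ` {v, c} = {u, c}" if "c \<noteq> v" for c using that by (auto simp: \<sigma>_def)
  have inadj: "ends H f \<in> adjs L" if "f \<in> edges H" for f using L(4) that by blast
  have uv: "{u, v} \<in> adjs L" using inadj[OF contract(2)] contract(3) by simp
  have img: "\<sigma> ` ends H f \<in> adjs (filter (\<lambda>x. x \<noteq> v) L) \<and>
     (v \<in> ends H f \<longrightarrow> (\<exists>b. ends H f = {v, b} \<and> b \<noteq> u \<and> b \<noteq> v \<and> \<sigma> ` ends H f = {u, b}))"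
    if f: "f \<in> edges H" "f \<noteq> e" for f
  proof -
    obtain a b where ab: "ends H f = {a, b}" "a \<noteq> b" using adjs_pair[OF L(1) inadj[OF f(1)]] by blast
    have fin: "{a, b} \<in> adjs L" using ab(1) inadj[OF f(1)] by simp
    have ne: "ends H f \<noteq> {u, v}" using contract(5) f contract(3) by simp
    show ?thesis
    proof (cases "v \<in> ends H f")
      case False
      then have "\<sigma> ` ends H f = ends H f" by (rule fixs)
      moreover have "ends H f \<in> adjs (filter (\<lambda>x. x \<noteq> v) L)"
        using adjs_filter[OF inadj[OF f(1)], of "\<lambda>x. x \<noteq> v"] False by blast
      ultimately show ?thesis using False by simp
    next
      case True
      then have vab: "v = a \<or> v = b" using ab(1) by simp
      define c where "c = (if v = a then b else a)"
      have c: "ends H f = {v, c}" "c \<noteq> v" using ab vab unfolding c_def by auto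
      have cu: "c \<noteq> u"
      proof
        assume "c = u"
        then have "ends H f = {v, u}" using c(1) by simp
        also have "\<dots> = {u, v}" by (rule insert_commute)
        finally show False using ne by simp
      qed
      have s: "\<sigma> ` ends H f = {u, c}" using c(1) sv[OF c(2)] by simp
      have vc: "{v, c} \<in> adjs L" using inadj[OF f(1)] c(1) by simp
      have uc: "{u, c} \<in> adjs (filter (\<lambda>x. x \<noteq> v) L)"
        by (rule adjs_contract[OF L(1) uv vc contract(4) not_sym[OF c(2)] not_sym[OF cu]])
      show ?thesis
      proof (intro conjI impI)
        show "\<sigma> ` ends H f \<in> adjs (filter (\<lambda>x. x \<noteq> v) L)" unfolding s by (rule uc)
        show "\<exists>b. ends H f = {v, b} \<and> b \<noteq> u \<and> b \<noteq> v \<and> \<sigma> ` ends H f = {u, b}"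
          apply (rule exI[of _ c]) using c(1) cu c(2) s by (intro conjI) assumption+
      qed
    qed
  qed
  have inj: "inj_on (ends H') (edges H')"
  proof (rule inj_onI)
    fix f g assume fg: "f \<in> edges H'" "g \<in> edges H'" "ends H' f = ends H' g"
    then have f: "f \<in> edges H" "f \<noteq> e" and g: "g \<in> edges H" "g \<noteq> e" using H'(2) by auto
    have eq: "\<sigma> ` ends H f = \<sigma> ` ends H g" using fg(3) H'(3) by simp
    have tri: False if "ends H f1 = {u, b}" "ends H g1 = {v, b}" "f1 \<in> edges H" "g1 \<in> edges H" "b \<noteq> u" "b \<noteq> v" for f1 g1 b
      using adjs_triangle[OF L(1) uv, of b] inadj[OF that(3)] inadj[OF that(4)] that contract(4) by simp
    show "f = g"
    proof (cases "v \<in> ends H f")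
      case vf: True
      then obtain b where b: "ends H f = {v, b}" "b \<noteq> u" "b \<noteq> v" "\<sigma> ` ends H f = {u, b}" using img f by blast
      show ?thesis
      proof (cases "v \<in> ends H g")
        case True
        then obtain b' where b': "ends H g = {v, b'}" "b' \<noteq> u" "b' \<noteq> v" "\<sigma> ` ends H g = {u, b'}" using img g by blast
        have "{u, b} = {u, b'}" using b(4) b'(4) eq by simp
        then have "b = b'" using b(2) b'(2) by (auto simp: doubleton_eq_iff)
        then have "ends H f = ends H g" using b(1) b'(1) by simp
        then show ?thesis by (rule inj_onD[OF L(3) _ f(1) g(1)])
      next
        case False
        then have "\<sigma> ` ends H g = ends H g" by (rule fixs)
        then have "ends H g = {u, b}" using eq b(4) by simp
        then show ?thesis using tri[OF _ b(1) g(1) f(1) b(2,3)] by blast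
      qed
    next
      case vf: False
      then have sf: "\<sigma> ` ends H f = ends H f" by (rule fixs)
      show ?thesis
      proof (cases "v \<in> ends H g")
        case True
        then obtain b where b: "ends H g = {v, b}" "b \<noteq> u" "b \<noteq> v" "\<sigma> ` ends H g = {u, b}" using img g by blast
        then have "ends H f = {u, b}" using eq sf by simp
        then show ?thesis using tri[OF _ b(1) f(1) g(1) b(2,3)] by blast
      next
        case False
        then have "\<sigma> ` ends H g = ends H g" by (rule fixs)
        then have "ends H f = ends H g" using eq sf by simp
        then show ?thesis by (rule inj_onD[OF L(3) _ f(1) g(1)])
      qed
    qed
  qed
  have sub: "ends H' ` edges H' \<subseteq> adjs (filter (\<lambda>x. x \<noteq> v) L)"
  proof
    fix p assume "p \<in> ends H' ` edges H'"
    then obtain f where "f \<in> edges H" "f \<noteq> e" "p = \<sigma> ` ends H f" using H' by auto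
    then show "p \<in> adjs (filter (\<lambda>x. x \<noteq> v) L)" using img by blast
  qed
  moreover have "distinct (filter (\<lambda>x. x \<noteq> v) L)" "set (filter (\<lambda>x. x \<noteq> v) L) = verts H'"
    using L H'(1) by auto
  ultimately show ?thesis unfolding inv_lin_def using inj
    by (intro exI[of _ "filter (\<lambda>x. x \<noteq> v) L"]) simp
qed


lemma path_len: "is_path G u v vs es \<Longrightarrow> finite (verts G) \<Longrightarrow> length vs \<le> card (verts G)"
  unfolding is_path_def by (metis card_mono distinct_card)

lemma shortcut:
  assumes p: "is_path G u v vs es" and ij: "Suc i < j" "j < length vs"
    and e: "e \<in> edges G" "ends G e = {vs ! i, vs ! j}"
  shows "is_path G u v (take (Suc i) vs @ drop j vs) (take i es @ e # drop j es)"
proof -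
  let ?vs = "take (Suc i) vs @ drop j vs" and ?es = "take i es @ e # drop j es"
  have P: "vs \<noteq> []" "distinct vs" "set vs \<subseteq> verts G" "hd vs = u" "last vs = v" "length es + 1 = length vs"
    "\<And>k. k < length es \<Longrightarrow> es ! k \<in> edges G \<and> ends G (es ! k) = {vs ! k, vs ! Suc k}"
    using p unfolding is_path_def by auto
  have lv: "length ?vs = Suc i + (length vs - j)" using ij by simp
  have le: "length ?es = i + 1 + (length vs - 1 - j)" using ij P(6) by simp
  have d: "distinct ?vs"
    using P(2) set_take_disj_set_drop_if_distinct[OF P(2), of "Suc i" j] ij by simp
  have s: "set ?vs \<subseteq> verts G" using P(3) set_take_subset[of "Suc i" vs] set_drop_subset[of j vs] by auto
  have h: "hd ?vs = u" using P(1,4) by (simp add: hd_append hd_take)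
  have l: "last ?vs = v" using P(5) ij by simp
  have vsk: "?vs ! k = (if k \<le> i then vs ! k else vs ! (j + k - Suc i))" if "k < length ?vs" for k
    using that ij by (auto simp: nth_append)
  have esk: "?es ! k = (if k < i then es ! k else if k = i then e else es ! (j + k - Suc i))" if "k < length ?es" for k
    using that ij P(6) by (auto simp: nth_append nth_Cons' min_def)
  have edge: "?es ! k \<in> edges G \<and> ends G (?es ! k) = {?vs ! k, ?vs ! Suc k}" if k: "k < length ?es" for k
  proof -
    consider "k < i" | "k = i" | "i < k" by linarith
    then show ?thesis
    proof cases
      case 1
      then show ?thesis using esk[OF k] vsk[of k] vsk[of "Suc k"] k le lv P(7)[of k] ij P(6) by auto
    next
      case 2
      then show ?thesis using esk[OF k] vsk[of k] vsk[of "Suc k"] k le lv e ij by auto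
    next
      case 3
      have m: "j + k - Suc i < length es" using k le ij P(6) 3 by simp
      have "Suc (j + k - Suc i) = j + Suc k - Suc i" using 3 ij by simp
      then show ?thesis using esk[OF k] vsk[of k] vsk[of "Suc k"] k le lv P(7)[OF m] ij 3 by auto
    qed
  qed
  show ?thesis unfolding is_path_def using d s h l lv le edge ij P(6) by auto
qed

lemma usp_ham:
  assumes wf: "wf_graph H" and sp: "sp H = 0"
  shows "\<exists>u v vs es. is_usp H u v vs es \<and> set vs = verts H"
proof -
  define S where "S = {length vs | vs. \<exists>u v es. is_usp H u v vs es}"
  have fin: "finite (verts H)" "verts H \<noteq> {}" using wf unfolding wf_graph_def by auto
  have "S \<subseteq> {..card (verts H)}"
  proof
    fix n assume "n \<in> S"
    then obtain vs u v es where "n = length vs" "is_usp H u v vs es" unfolding S_def by blast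
    then show "n \<in> {..card (verts H)}" using path_len[OF _ fin(1)] unfolding is_usp_def by auto
  qed
  then have finS: "finite S" using finite_subset by blast
  obtain x where x: "x \<in> verts H" using fin by blast
  have "is_usp H x x [x] []"
  proof -
    have p: "is_path H x x [x] []" using x unfolding is_path_def by simp
    have a: "vs' = [x] \<and> es' = []" if "is_path H x x vs' es'" "length vs' = 1" for vs' es'
    proof -
      have "vs' \<noteq> []" "hd vs' = x" "length es' + 1 = length vs'" using that(1) unfolding is_path_def by auto
      then show ?thesis using that(2) by (cases vs') auto
    qed
    have b: "1 \<le> length vs'" if "is_path H x x vs' es'" for vs' es'
    proof -
      have "vs' \<noteq> []" using that unfolding is_path_def by auto
      then show ?thesis by (cases vs') auto
    qed
    show ?thesis unfolding is_usp_def
    proof (intro conjI allI impI)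
      show "is_path H x x [x] []" by (rule p)
      fix vs' es' assume "is_path H x x vs' es'"
      then show "length [x] \<le> length vs'" using b by simp
    next
      fix vs' es' assume "is_path H x x vs' es' \<and> length vs' = length [x]"
      then show "vs' = [x]" "es' = []" using a by auto
    qed
  qed
  then have "length [x] \<in> S" unfolding S_def by blast
  then have "Max S \<in> S" using finS Max_in by blast
  then obtain vs where vs: "Max S = length vs" "\<exists>u v es. is_usp H u v vs es" unfolding S_def by blast
  then obtain u v es where usp: "is_usp H u v vs es" "length vs = Max S" by auto
  have up: "is_path H u v vs es" using usp(1) unfolding is_usp_def by blast
  have "usp H = Max S" unfolding usp_def S_def by (rule refl)
  then have "card (verts H) \<le> Max S" using sp unfolding sp_def by simp
  then have "card (verts H) \<le> length vs" using usp by simp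
  moreover have "length vs \<le> card (verts H)" by (rule path_len[OF up fin(1)])
  ultimately have "card (set vs) = card (verts H)" using usp(1) unfolding is_usp_def is_path_def
    by (simp add: distinct_card)
  then have "set vs = verts H" using usp(1) fin unfolding is_usp_def is_path_def by (meson card_subset_eq)
  then show ?thesis using usp by blast
qed


lemma ham_inv:
  assumes wf: "wf_graph H" and usp: "is_usp H u v vs es" and s: "set vs = verts H"
  shows "inv_lin H"
proof -
  have p: "is_path H u v vs es" using usp unfolding is_usp_def by blast
  have minl: "length vs \<le> length vs'" if "is_path H u v vs' es'" for vs' es'
    using usp that unfolding is_usp_def by blast
  have uniq: "vs' = vs \<and> es' = es" if "is_path H u v vs' es'" "length vs' = length vs" for vs' es'
    using usp that unfolding is_usp_def by blast
  have P: "distinct vs" "length es + 1 = length vs"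
    "\<And>k. k < length es \<Longrightarrow> es ! k \<in> edges H \<and> ends H (es ! k) = {vs ! k, vs ! Suc k}"
    using p unfolding is_path_def by auto
  have key: "j = Suc i" if e: "e \<in> edges H" and ij: "i < j" "j < length vs" "ends H e = {vs ! i, vs ! j}" for e i j
  proof (rule ccontr)
    assume "j \<noteq> Suc i"
    then have "Suc i < j" using ij by simp
    then have "is_path H u v (take (Suc i) vs @ drop j vs) (take i es @ e # drop j es)"
      using shortcut[OF p _ ij(2) e ij(3)] by blast
    then have "length vs \<le> length (take (Suc i) vs @ drop j vs)" by (rule minl)
    then show False using \<open>Suc i < j\<close> ij by simp
  qed
  have cons: "\<exists>i. Suc i < length vs \<and> ends H e = {vs ! i, vs ! Suc i}" if e: "e \<in> edges H" for e
  proof -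
    have "ends H e \<subseteq> verts H" "card (ends H e) = 2" using wf e unfolding wf_graph_def by auto
    then obtain a b where ab: "ends H e = {a, b}" "a \<noteq> b" "a \<in> verts H" "b \<in> verts H"
      by (metis card_2_iff insert_subset)
    obtain i where i: "i < length vs" "vs ! i = a" using ab(3) s by (metis in_set_conv_nth)
    obtain j where j: "j < length vs" "vs ! j = b" using ab(4) s by (metis in_set_conv_nth)
    have "i \<noteq> j" using i j ab by auto
    then consider "i < j" | "j < i" by linarith
    then show ?thesis
    proof cases
      case 1
      then have "j = Suc i" using key[OF e 1 j(1)] ab i j by simp
      then show ?thesis using ab i j by auto
    next
      case 2
      have "ends H e = {vs ! j, vs ! i}" using ab i j by auto
      then have "i = Suc j" using key[OF e 2 i(1)] by simp
      then show ?thesis using \<open>ends H e = {vs ! j, vs ! i}\<close> i by auto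
    qed
  qed
  have claim: "f = es ! i" if f: "f \<in> edges H" "ends H f = {vs ! i, vs ! Suc i}" and i: "Suc i < length vs" for f i
  proof (rule ccontr)
    assume ne: "f \<noteq> es ! i"
    have il: "i < length es" using i P(2) by simp
    have "is_path H u v vs (es[i := f])"
      using p f il unfolding is_path_def by (auto simp: nth_list_update)
    then have "es[i := f] = es" using uniq by blast
    then have "es ! i = f" by (metis il nth_list_update_eq)
    then show False using ne by simp
  qed
  have inj: "inj_on (ends H) (edges H)"
  proof (rule inj_onI)
    fix e1 e2 assume e: "e1 \<in> edges H" "e2 \<in> edges H" "ends H e1 = ends H e2"
    obtain i where i: "Suc i < length vs" "ends H e1 = {vs ! i, vs ! Suc i}" using cons[OF e(1)] by blast
    have "e1 = es ! i" using claim[OF e(1) i(2) i(1)] .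
    moreover have "e2 = es ! i" using claim[OF e(2) _ i(1)] i(2) e(3) by simp
    ultimately show "e1 = e2" by simp
  qed
  have "ends H ` edges H \<subseteq> adjs vs"
  proof
    fix p assume "p \<in> ends H ` edges H"
    then obtain e where "e \<in> edges H" "p = ends H e" by blast
    then show "p \<in> adjs vs" using cons unfolding adjs_nth by blast
  qed
  then show ?thesis unfolding inv_lin_def using P(1) s inj by blast
qed


definition pathG :: "nat \<Rightarrow> (nat, nat) mgraph" where
  "pathG n = \<lparr>verts = {0..<n}, edges = {0..<n - 1}, ends = (\<lambda>i. {i, Suc i})\<rparr>"

lemma pathG_wf: "0 < n \<Longrightarrow> wf_graph (pathG n)"
  unfolding wf_graph_def pathG_def by auto

lemma usp_ge:
  assumes wf: "wf_graph H" and u: "is_usp H u v vs es"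
  shows "length vs \<le> usp H"
proof -
  define S where "S = {length vs | vs. \<exists>u v es. is_usp H u v vs es}"
  have fin: "finite (verts H)" using wf unfolding wf_graph_def by auto
  have "S \<subseteq> {..card (verts H)}"
  proof
    fix n assume "n \<in> S"
    then obtain vs u v es where "n = length vs" "is_usp H u v vs es" unfolding S_def by blast
    then show "n \<in> {..card (verts H)}" using path_len[OF _ fin] unfolding is_usp_def by auto
  qed
  then have finS: "finite S" using finite_subset by blast
  have "length vs \<in> S" unfolding S_def using u by blast
  then have "length vs \<le> Max S" using finS by simp
  moreover have "usp H = Max S" unfolding usp_def S_def by (rule refl)
  ultimately show ?thesis by simp
qed

lemma pathG_id:
  assumes p: "is_path (pathG n) 0 w vs es"
  shows "\<forall>m \<le> k. m < length vs \<longrightarrow> vs ! m = m"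
proof (induction k)
  case 0
  have "vs \<noteq> []" "hd vs = 0" using p unfolding is_path_def by auto
  then show ?case by (simp add: hd_conv_nth)
next
  case (Suc k)
  have P: "distinct vs" "length es + 1 = length vs"
    "\<And>k. k < length es \<Longrightarrow> ends (pathG n) (es ! k) = {vs ! k, vs ! Suc k}"
    using p unfolding is_path_def by auto
  have "vs ! Suc k = Suc k" if sk: "Suc k < length vs"
  proof -
    have kl: "k < length es" using sk P(2) by simp
    have vk: "vs ! k = k" using Suc sk by simp
    have e: "{es ! k, Suc (es ! k)} = {k, vs ! Suc k}" using P(3)[OF kl] vk unfolding pathG_def by simp
    show ?thesis
    proof (cases "es ! k = k")
      case True then show ?thesis using e by (auto simp: doubleton_eq_iff)
    next
      case False
      then have a: "Suc (es ! k) = k" "vs ! Suc k = es ! k" using e by (auto simp: doubleton_eq_iff)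
      then have "vs ! (k - 1) = k - 1" using Suc sk by simp
      then have "vs ! Suc k = vs ! (k - 1)" using a by simp
      moreover have "Suc k \<noteq> k - 1" by simp
      ultimately show ?thesis using P(1) sk by (simp add: nth_eq_iff_index_eq)
    qed
  qed
  note sk = this
  show ?case
  proof (intro allI impI)
    fix m assume m: "m \<le> Suc k" "m < length vs"
    show "vs ! m = m"
    proof (cases "m = Suc k")
      case True then show ?thesis using sk m(2) by simp
    next
      case False then have "m \<le> k" using m(1) by simp
      then show ?thesis using Suc.IH m(2) by blast
    qed
  qed
qed

lemma pathG_path_eq:
  assumes p: "is_path (pathG n) 0 w vs es"
  shows "vs = [0..<length vs]" "es = [0..<length es]"
proof -
  have v: "vs ! m = m" if "m < length vs" for m using pathG_id[OF p, of m] that by simp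
  show "vs = [0..<length vs]" by (rule nth_equalityI) (simp_all add: v)
  have P: "length es + 1 = length vs"
    "\<And>k. k < length es \<Longrightarrow> ends (pathG n) (es ! k) = {vs ! k, vs ! Suc k}"
    using p unfolding is_path_def by auto
  have "es ! k = k" if k: "k < length es" for k
  proof -
    have "{es ! k, Suc (es ! k)} = {k, Suc k}" using P(2)[OF k] v[of k] v[of "Suc k"] k P(1) unfolding pathG_def by simp
    then show ?thesis by (auto simp: doubleton_eq_iff)
  qed
  then show "es = [0..<length es]" by (intro nth_equalityI) simp_all
qed

lemma pathG_sp:
  assumes n: "0 < n"
  shows "sp (pathG n) = 0"
proof -
  let ?vs = "[0..<n]" and ?es = "[0..<n - 1]"
  have p: "is_path (pathG n) 0 (n - 1) ?vs ?es"
    unfolding is_path_def pathG_def using n by (auto simp: hd_upt last_upt)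
  have A: "length vs' = n" if q: "is_path (pathG n) 0 (n - 1) vs' es'" for vs' es'
  proof -
    have "vs' = [0..<length vs']" using pathG_path_eq[OF q] by simp
    moreover have "vs' \<noteq> []" "last vs' = n - 1" using q unfolding is_path_def by auto
    ultimately have "last [0..<length vs'] = n - 1" "length vs' > 0" by auto
    then have "length vs' - 1 = n - 1" by (simp add: last_upt)
    then show ?thesis using n \<open>length vs' > 0\<close> by arith
  qed
  have B: "vs' = ?vs \<and> es' = ?es" if q: "is_path (pathG n) 0 (n - 1) vs' es'" "length vs' = n" for vs' es'
  proof -
    have "length es' + 1 = length vs'" using q unfolding is_path_def by auto
    then show ?thesis using pathG_path_eq[OF q(1)] q(2) by (metis add_diff_cancel_right')
  qed
  have U: "is_usp (pathG n) 0 (n - 1) ?vs ?es" unfolding is_usp_def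
  proof (intro conjI allI impI)
    fix vs' es' assume "is_path (pathG n) 0 (n - 1) vs' es'"
    then show "length ?vs \<le> length vs'" using A by simp
  next
    fix vs' es' assume a: "is_path (pathG n) 0 (n - 1) vs' es' \<and> length vs' = length ?vs"
    then show "vs' = ?vs" "es' = ?es" using B by auto
  qed (rule p)
  have "length ?vs \<le> usp (pathG n)" by (rule usp_ge[OF pathG_wf[OF n] U])
  then have "n \<le> usp (pathG n)" by simp
  then show ?thesis unfolding sp_def pathG_def by simp
qed

lemma del_edges: "finite D \<Longrightarrow> D \<subseteq> edges H \<Longrightarrow> minor_step\<^sup>*\<^sup>* H (H\<lparr>edges := edges H - D\<rparr>)"
proof (induction D rule: finite_induct)
  case empty then show ?case by simp
next
  case (insert x F)
  have r: "minor_step\<^sup>*\<^sup>* H (H\<lparr>edges := edges H - F\<rparr>)" using insert.IH insert.prems by blast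
  have "x \<in> edges (H\<lparr>edges := edges H - F\<rparr>)" using insert by simp
  then have st: "minor_step (H\<lparr>edges := edges H - F\<rparr>) ((H\<lparr>edges := edges H - F\<rparr>)\<lparr>edges := edges (H\<lparr>edges := edges H - F\<rparr>) - {x}\<rparr>)"
    by (rule minor_step.del_edge)
  have eq: "(H\<lparr>edges := edges H - F\<rparr>)\<lparr>edges := edges (H\<lparr>edges := edges H - F\<rparr>) - {x}\<rparr> = H\<lparr>edges := edges H - insert x F\<rparr>"
  proof -
    have d: "edges H - F - {x} = edges H - insert x F" by blast
    show ?thesis using d by simp
  qed
  show ?case using rtranclp.rtrancl_into_rtrancl[OF r st] unfolding eq .
qed

lemma adjs_concat: "\<Union>(adjs ` set Ps) \<subseteq> adjs (concat Ps)"
  by (induction Ps) (auto simp: adjs_append)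

lemma adjs_Ps: "\<Union>(adjs ` set Ps) = {{P ! i, P ! Suc i} | P i. P \<in> set Ps \<and> Suc i < length P}"
  unfolding adjs_nth by blast

lemma inv_steps: "minor_step\<^sup>*\<^sup>* H H' \<Longrightarrow> inv_lin H \<Longrightarrow> inv_lin H'"
  by (induction rule: rtranclp_induct) (auto intro: inv_step)

lemma inv_iso:
  assumes "graph_iso H G" "inv_lin H"
  shows "inv_lin G"
proof -
  obtain f g where fg: "bij_betw f (verts H) (verts G)" "bij_betw g (edges H) (edges G)"
    "\<forall>e\<in>edges H. ends G (g e) = f ` ends H e" using assms(1) unfolding graph_iso_def by blast
  from assms(2) obtain L where L: "distinct L" "set L = verts H" "inj_on (ends H) (edges H)" "ends H ` edges H \<subseteq> adjs L"
    unfolding inv_lin_def by blast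
  have injf: "inj_on f (verts H)" using fg(1) bij_betw_def by blast
  have sub: "ends H e \<subseteq> verts H" if "e \<in> edges H" for e using L adjs_sub that by blast
  have d: "distinct (map f L)" using L injf by (simp add: distinct_map)
  have s: "set (map f L) = verts G" using L fg(1) by (simp add: bij_betw_def)
  have inj: "inj_on (ends G) (edges G)"
  proof (rule inj_onI)
    fix x y assume xy: "x \<in> edges G" "y \<in> edges G" "ends G x = ends G y"
    obtain a b where ab: "a \<in> edges H" "b \<in> edges H" "x = g a" "y = g b"
      using xy fg(2) unfolding bij_betw_def by blast
    have "f ` ends H a = f ` ends H b" using xy ab fg(3) by simp
    then have "ends H a = ends H b" using inj_on_image_eq_iff[OF injf sub[OF ab(1)] sub[OF ab(2)]] by simp
    then show "x = y" using ab L(3) by (auto dest: inj_onD)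
  qed
  have "ends G ` edges G \<subseteq> adjs (map f L)"
  proof
    fix p assume "p \<in> ends G ` edges G"
    then obtain x where x: "x \<in> edges G" "p = ends G x" by blast
    then obtain a where a: "a \<in> edges H" "x = g a" using fg(2) unfolding bij_betw_def by auto
    then show "p \<in> adjs (map f L)" using fg(3) L(4) x by (auto simp: adjs_map)
  qed
  then show ?thesis unfolding inv_lin_def using d s inj by blast
qed

lemma split_exists:
  "A \<subseteq> adjs L \<Longrightarrow> \<exists>Ps. [] \<notin> set Ps \<and> concat Ps = L \<and> \<Union>(adjs ` set Ps) = A"
proof (induction L arbitrary: A)
  case Nil then show ?case by (intro exI[of _ "[]"]) auto
next
  case (Cons x L)
  show ?case
  proof (cases "L = []")
    case True
    then show ?thesis using Cons.prems by (intro exI[of _ "[[x]]"]) auto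
  next
    case False
    define A' where "A' = A - {{x, hd L}}"
    have "A' \<subseteq> adjs L" using Cons.prems False unfolding A'_def by (auto simp: adjs_Cons)
    then obtain Ps where Ps: "[] \<notin> set Ps" "concat Ps = L" "\<Union>(adjs ` set Ps) = A'" using Cons.IH by blast
    then obtain P Qs where PQ: "Ps = P # Qs" using False by (cases Ps) auto
    have Pne: "P \<noteq> []" using Ps PQ by auto
    have hdP: "hd P = hd L" using Ps PQ Pne by auto
    show ?thesis
    proof (cases "{x, hd L} \<in> A")
      case True
      have "\<Union>(adjs ` set ((x # P) # Qs)) = insert {x, hd L} A'"
        using Ps(3) PQ Pne hdP by (auto simp: adjs_Cons)
      also have "\<dots> = A" using True A'_def by auto
      finally show ?thesis using Ps PQ by (intro exI[of _ "(x # P) # Qs"]) auto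
    next
      case False
      then show ?thesis using Ps unfolding A'_def by (intro exI[of _ "[x] # Ps"]) auto
    qed
  qed
qed

lemma inv_dup: "inv_lin G \<Longrightarrow> disjoint_union_of_paths G"
proof -
  assume "inv_lin G"
  then obtain L where L: "distinct L" "set L = verts G" "inj_on (ends G) (edges G)" "ends G ` edges G \<subseteq> adjs L"
    unfolding inv_lin_def by blast
  obtain Ps where Ps: "[] \<notin> set Ps" "concat Ps = L" "\<Union>(adjs ` set Ps) = ends G ` edges G"
    using split_exists[OF L(4)] by blast
  show ?thesis unfolding disjoint_union_of_paths_def
  proof (intro exI[of _ Ps] conjI)
    show "ends G ` edges G = {{P ! i, P ! Suc i} | P i. P \<in> set Ps \<and> Suc i < length P}"
      using Ps(3) adjs_Ps[of Ps] by simp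
  qed (use Ps L in simp_all)
qed


lemma dup_minor:
  assumes G: "disjoint_union_of_paths G"
  shows "is_minor G (pathG (card (verts G)))"
proof -
  obtain Ps where Ps: "[] \<notin> set Ps" "distinct (concat Ps)" "set (concat Ps) = verts G"
    "inj_on (ends G) (edges G)" "ends G ` edges G = {{P ! i, P ! Suc i} | P i. P \<in> set Ps \<and> Suc i < length P}"
    using G unfolding disjoint_union_of_paths_def by (elim exE conjE) (rule that)
  note Ps(5)[folded adjs_Ps]
  define L where "L = concat Ps"
  define n where "n = card (verts G)"
  have L: "distinct L" "set L = verts G" "length L = n" using Ps unfolding L_def n_def
    by (auto simp: distinct_card[symmetric])
  have E: "ends G ` edges G \<subseteq> adjs L" using Ps(5)[folded adjs_Ps] adjs_concat unfolding L_def by blast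
  define E' where "E' = {i \<in> {0..<n - 1}. {L ! i, L ! Suc i} \<in> ends G ` edges G}"
  define D where "D = {0..<n - 1} - E'"
  define H' where "H' = (pathG n)\<lparr>edges := edges (pathG n) - D\<rparr>"
  have steps: "minor_step\<^sup>*\<^sup>* (pathG n) H'" unfolding H'_def
    by (rule del_edges) (auto simp: D_def pathG_def)
  have H': "verts H' = {0..<n}" "edges H' = E'" "ends H' = (\<lambda>i. {i, Suc i})"
    unfolding H'_def D_def pathG_def E'_def by auto
  define f where "f = (\<lambda>i. L ! i)"
  define g where "g = (\<lambda>i. inv_into (edges G) (ends G) {L ! i, L ! Suc i})"
  have bf: "bij_betw f {0..<n} (verts G)" unfolding f_def
    by (rule bij_betw_nth) (use L in auto)
  have endsg: "ends G (g i) = {L ! i, L ! Suc i}" "g i \<in> edges G" if "i \<in> E'" for i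
  proof -
    have m: "{L ! i, L ! Suc i} \<in> ends G ` edges G" using that unfolding E'_def by blast
    show "ends G (g i) = {L ! i, L ! Suc i}" unfolding g_def by (rule f_inv_into_f[OF m])
    show "g i \<in> edges G" unfolding g_def by (rule inv_into_into[OF m])
  qed
  have pair_inj: "i = j" if "{L ! i, L ! Suc i} = {L ! j, L ! Suc j}" "Suc i < n" "Suc j < n" for i j
  proof -
    have "(L ! i = L ! j \<and> L ! Suc i = L ! Suc j) \<or> (L ! i = L ! Suc j \<and> L ! Suc i = L ! j)"
      using that(1) by (auto simp: doubleton_eq_iff)
    then show ?thesis
    proof
      assume "L ! i = L ! j \<and> L ! Suc i = L ! Suc j"
      then show ?thesis using L that by (simp add: nth_eq_iff_index_eq)
    next
      assume a: "L ! i = L ! Suc j \<and> L ! Suc i = L ! j"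
      have li: "i < length L" "Suc i < length L" "j < length L" "Suc j < length L" using L(3) that by auto
      have "i = Suc j" using a nth_eq_iff_index_eq[OF L(1) li(1) li(4)] by blast
      moreover have "Suc i = j" using a nth_eq_iff_index_eq[OF L(1) li(2) li(3)] by blast
      ultimately show ?thesis by arith
    qed
  qed
  have bg: "bij_betw g E' (edges G)"
    unfolding bij_betw_def
  proof
    show "inj_on g E'"
    proof (rule inj_onI)
      fix i j assume ij: "i \<in> E'" "j \<in> E'" "g i = g j"
      then have "{L ! i, L ! Suc i} = {L ! j, L ! Suc j}" using endsg by metis
      moreover have "Suc i < n" "Suc j < n" using ij unfolding E'_def by auto
      ultimately show "i = j" by (rule pair_inj)
    qed
    show "g ` E' = edges G"
    proof
      show "g ` E' \<subseteq> edges G" using endsg by blast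
      show "edges G \<subseteq> g ` E'"
      proof
        fix e assume e: "e \<in> edges G"
        then have "ends G e \<in> adjs L" using E by blast
        then obtain i where i: "ends G e = {L ! i, L ! Suc i}" "Suc i < length L" unfolding adjs_nth by blast
        have iE: "i \<in> E'" unfolding E'_def using i e L(3) by force
        have "g i = e" unfolding g_def using i(1)[symmetric] inv_into_f_f[OF Ps(4) e] by simp
        then show "e \<in> g ` E'" using iE by blast
      qed
    qed
  qed
  have "graph_iso H' G" unfolding graph_iso_def
  proof (intro exI conjI)
    show "bij_betw f (verts H') (verts G)" using bf H' by simp
    show "bij_betw g (edges H') (edges G)" using bg H' by simp
    show "\<forall>e\<in>edges H'. ends G (g e) = f ` ends H' e" using endsg H' unfolding f_def by auto
  qed
  then show ?thesis unfolding is_minor_def n_def[symmetric] using steps by blast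
qed

lemma copy:
  assumes wf: "wf_graph G"
  shows "\<exists>H :: (nat, nat) mgraph. wf_graph H \<and> is_minor G H"
proof -
  have fin: "finite (verts G)" "verts G \<noteq> {}" "finite (edges G)"
    and ed: "\<And>e. e \<in> edges G \<Longrightarrow> ends G e \<subseteq> verts G \<and> card (ends G e) = 2"
    using wf unfolding wf_graph_def by auto
  obtain hv where hv: "bij_betw hv {0..<card (verts G)} (verts G)" using ex_bij_betw_nat_finite fin(1) by blast
  obtain he where he: "bij_betw he {0..<card (edges G)} (edges G)" using ex_bij_betw_nat_finite fin(3) by blast
  define iv where "iv = inv_into {0..<card (verts G)} hv"
  define H :: "(nat, nat) mgraph" where
    "H = \<lparr>verts = {0..<card (verts G)}, edges = {0..<card (edges G)}, ends = (\<lambda>i. iv ` ends G (he i))\<rparr>"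
  have hvim: "hv ` {0..<card (verts G)} = verts G" using hv by (simp add: bij_betw_def)
  have heim: "he ` {0..<card (edges G)} = edges G" using he by (simp add: bij_betw_def)
  have injiv: "inj_on iv (verts G)" unfolding iv_def using hvim by (simp add: inj_on_inv_into)
  have ivin: "iv x \<in> {0..<card (verts G)}" if "x \<in> verts G" for x
    unfolding iv_def using that hvim by (metis inv_into_into)
  have hviv: "hv (iv x) = x" if "x \<in> verts G" for x
    unfolding iv_def using that hvim by (metis f_inv_into_f)
  have wfH: "wf_graph H" unfolding wf_graph_def
  proof (intro conjI ballI)
    show "finite (verts H)" "verts H \<noteq> {}" "finite (edges H)" unfolding H_def using fin by (auto simp: card_gt_0_iff)
  next
    fix i assume i: "i \<in> edges H"
    then have e: "he i \<in> edges G" using heim unfolding H_def by auto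
    show "ends H i \<subseteq> verts H" unfolding H_def using ed[OF e] ivin by auto
    have "card (iv ` ends G (he i)) = card (ends G (he i))"
      using ed[OF e] injiv by (meson card_image inj_on_subset)
    then show "card (ends H i) = 2" unfolding H_def using ed[OF e] by simp
  qed
  have "graph_iso H G" unfolding graph_iso_def
  proof (intro exI conjI)
    show "bij_betw hv (verts H) (verts G)" using hv unfolding H_def by simp
    show "bij_betw he (edges H) (edges G)" using he unfolding H_def by simp
    show "\<forall>e\<in>edges H. ends G (he e) = hv ` ends H e"
    proof
      fix i assume i: "i \<in> edges H"
      then have e: "he i \<in> edges G" using heim unfolding H_def by auto
      have "hv ` ends H i = (\<lambda>x. hv (iv x)) ` ends G (he i)" unfolding H_def by (simp add: image_image)
      also have "\<dots> = ends G (he i)" using ed[OF e] hviv by (simp add: subset_iff)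
      finally show "ends G (he i) = hv ` ends H i" by simp
    qed
  qed
  then have "is_minor G H" unfolding is_minor_def by blast
  then show ?thesis using wfH by blast
qed

theorem proposition6p1:
  fixes G :: "('a, 'b) mgraph"
  assumes "wf_graph G"
  shows "spec_floor G = 0 \<longleftrightarrow> disjoint_union_of_paths G"
proof -
  define P where "P = (\<lambda>n. \<exists>H :: (nat, nat) mgraph. wf_graph H \<and> is_minor G H \<and> sp H = n)"
  have sf: "spec_floor G = (LEAST n. P n)" unfolding spec_floor_def P_def by (rule refl)
  show ?thesis
  proof
    assume "spec_floor G = 0"
    obtain H0 :: "(nat, nat) mgraph" where "wf_graph H0" "is_minor G H0" using copy[OF assms] by blast
    then have "P (sp H0)" unfolding P_def by blast
    then have "P (LEAST n. P n)" by (rule LeastI)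
    then have "P 0" using \<open>spec_floor G = 0\<close> sf by simp
    then obtain H :: "(nat, nat) mgraph" where H: "wf_graph H" "is_minor G H" "sp H = 0" unfolding P_def by blast
    obtain u v vs es where "is_usp H u v vs es" "set vs = verts H" using usp_ham[OF H(1) H(3)] by blast
    then have "inv_lin H" using ham_inv[OF H(1)] by blast
    moreover obtain H' where "minor_step\<^sup>*\<^sup>* H H'" "graph_iso H' G" using H(2) unfolding is_minor_def by blast
    ultimately have "inv_lin G" using inv_steps inv_iso by blast
    then show "disjoint_union_of_paths G" by (rule inv_dup)
  next
    assume d: "disjoint_union_of_paths G"
    have n: "0 < card (verts G)" using assms unfolding wf_graph_def by (auto simp: card_gt_0_iff)
    have "P 0" unfolding P_def using dup_minor[OF d] pathG_wf[OF n] pathG_sp[OF n] by blast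
    then show "spec_floor G = 0" unfolding sf by (rule Least_eq_0)
  qed
qed

end
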